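(* Let $(Q,\cdot,e)$ be a double Ward quasigroup of finite order $n$ which is $k$-translatable (with respect to some ordering of $Q$ as $1,2,\ldots,n$), where $1\le k<n$. Then $k=n-1$ and $(Q,\cdot,e)$ is induced by a cyclic group, i.e. the group $(Q,\diamond)$ with $x\diamond y=(e\cdot x)\cdot(e\cdot y)$ is cyclic.
   Context: A double Ward quasigroup $(Q,\cdot,e)$ is a quasigroup (a magma in which $ax=b$, $ya=b$ have unique solutions) with an element $e$ such that $(ee\cdot xz)(ey\cdot z)=xy$ for all $x,y,z$; the operation $x\diamond y=(ex)(ey)$ makes $Q$ a group with identity $e$, and $xy=x^{-1}\diamond y^{-1}$. With $Q=\{1,\ldots,n\}$ ordered naturally and $[i]_n$ denoting $i$ modulo $n$ (with $0$ identified with $n$), a magma $(Q,\cdot)$ is $k$-translatable ($1\le k<n$) if $i\cdot j=[i+1]_n\cdot[j+k]_n$ for all $i,j\in Q$; equivalently each row of the multiplication table is obtained from the previous one by moving its last $k$ entries to the front. *)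

theory Defs
  imports "HOL-Algebra.Elementary_Groups"
begin

text \<open>Q = {1..n}. [i]_n : i modulo n, with 0 identified with n.\<close>
definition modn :: "nat \<Rightarrow> nat \<Rightarrow> nat" where
  "modn n i = (if i mod n = 0 then n else i mod n)"

definition quasigroup_on :: "'a set \<Rightarrow> ('a \<Rightarrow> 'a \<Rightarrow> 'a) \<Rightarrow> bool" where
  "quasigroup_on Q f \<longleftrightarrow>
     (\<forall>x\<in>Q. \<forall>y\<in>Q. f x y \<in> Q) \<and>
     (\<forall>a\<in>Q. \<forall>b\<in>Q. \<exists>!x. x \<in> Q \<and> f a x = b) \<and>
     (\<forall>a\<in>Q. \<forall>b\<in>Q. \<exists>!y. y \<in> Q \<and> f y a = b)"

definition double_ward :: "'a set \<Rightarrow> ('a \<Rightarrow> 'a \<Rightarrow> 'a) \<Rightarrow> 'a \<Rightarrow> bool" where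
  "double_ward Q f e \<longleftrightarrow> quasigroup_on Q f \<and> e \<in> Q \<and>
     (\<forall>x\<in>Q. \<forall>y\<in>Q. \<forall>z\<in>Q. f (f (f e e) (f x z)) (f (f e y) z) = f x y)"

definition translatable :: "nat \<Rightarrow> (nat \<Rightarrow> nat \<Rightarrow> nat) \<Rightarrow> nat \<Rightarrow> bool" where
  "translatable n f k \<longleftrightarrow>
     (\<forall>i\<in>{1..n}. \<forall>j\<in>{1..n}. f i j = f (modn n (i + 1)) (modn n (j + k)))"

definition diamond_group :: "'a set \<Rightarrow> ('a \<Rightarrow> 'a \<Rightarrow> 'a) \<Rightarrow> 'a \<Rightarrow> 'a monoid" where
  "diamond_group Q f e = \<lparr>carrier = Q, monoid.mult = (\<lambda>x y. f (f e x) (f e y)), one = e\<rparr>"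

end

theory Submission
  imports Defs "HOL-Number_Theory.Cong"
begin

lemma qg_facts:
  assumes qg: "quasigroup_on Q f"
  shows qcl: "\<And>x y. x \<in> Q \<Longrightarrow> y \<in> Q \<Longrightarrow> f x y \<in> Q"
  and qls: "\<And>a b. a \<in> Q \<Longrightarrow> b \<in> Q \<Longrightarrow> \<exists>x\<in>Q. f a x = b"
  and qrs: "\<And>a b. a \<in> Q \<Longrightarrow> b \<in> Q \<Longrightarrow> \<exists>y\<in>Q. f y a = b"
  and qlc: "\<And>a x x'. a \<in> Q \<Longrightarrow> x \<in> Q \<Longrightarrow> x' \<in> Q \<Longrightarrow> f a x = f a x' \<Longrightarrow> x = x'"
  and qrc: "\<And>a y y'. a \<in> Q \<Longrightarrow> y \<in> Q \<Longrightarrow> y' \<in> Q \<Longrightarrow> f y a = f y' a \<Longrightarrow> y = y'"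
proof -
  have A: "\<forall>x\<in>Q. \<forall>y\<in>Q. f x y \<in> Q" 
    using qg unfolding quasigroup_on_def by (rule conjunct1)
  have B: "\<forall>a\<in>Q. \<forall>b\<in>Q. \<exists>!x. x \<in> Q \<and> f a x = b"
    using qg unfolding quasigroup_on_def by (rule conjunct1[OF conjunct2])
  have C: "\<forall>a\<in>Q. \<forall>b\<in>Q. \<exists>!y. y \<in> Q \<and> f y a = b"
    using qg unfolding quasigroup_on_def by (rule conjunct2[OF conjunct2])
  show "\<And>x y. x \<in> Q \<Longrightarrow> y \<in> Q \<Longrightarrow> f x y \<in> Q" using A by blast
  show "\<And>a b. a \<in> Q \<Longrightarrow> b \<in> Q \<Longrightarrow> \<exists>x\<in>Q. f a x = b"
  proof -
    fix a b assume "a \<in> Q" "b \<in> Q"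
    then obtain x where "x \<in> Q \<and> f a x = b" using bspec[OF bspec[OF B]] by blast
    then show "\<exists>x\<in>Q. f a x = b" by blast
  qed
  show "\<And>a b. a \<in> Q \<Longrightarrow> b \<in> Q \<Longrightarrow> \<exists>y\<in>Q. f y a = b"
  proof -
    fix a b assume "a \<in> Q" "b \<in> Q"
    then obtain x where "x \<in> Q \<and> f x a = b" using bspec[OF bspec[OF C]] by blast
    then show "\<exists>x\<in>Q. f x a = b" by blast
  qed
  show "\<And>a x x'. a \<in> Q \<Longrightarrow> x \<in> Q \<Longrightarrow> x' \<in> Q \<Longrightarrow> f a x = f a x' \<Longrightarrow> x = x'"
  proof -
    fix a x x' assume h: "a \<in> Q" "x \<in> Q" "x' \<in> Q" "f a x = f a x'"
    have "f a x \<in> Q" using A h by blast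
    then have u: "\<exists>!t. t \<in> Q \<and> f a t = f a x" using bspec[OF bspec[OF B h(1)]] by simp
    have 1: "(THE t. t \<in> Q \<and> f a t = f a x) = x" using h by (intro the1_equality[OF u]) simp
    have 2: "(THE t. t \<in> Q \<and> f a t = f a x) = x'" using h by (intro the1_equality[OF u]) simp
    from 1 2 show "x = x'" by simp
  qed
  show "\<And>a x x'. a \<in> Q \<Longrightarrow> x \<in> Q \<Longrightarrow> x' \<in> Q \<Longrightarrow> f x a = f x' a \<Longrightarrow> x = x'"
  proof -
    fix a x x' assume h: "a \<in> Q" "x \<in> Q" "x' \<in> Q" "f x a = f x' a"
    have "f x a \<in> Q" using A h by blast
    then have u: "\<exists>!t. t \<in> Q \<and> f t a = f x a" using bspec[OF bspec[OF C h(1)]] by simp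
    have 1: "(THE t. t \<in> Q \<and> f t a = f x a) = x" using h by (intro the1_equality[OF u]) simp
    have 2: "(THE t. t \<in> Q \<and> f t a = f x a) = x'" using h by (intro the1_equality[OF u]) simp
    from 1 2 show "x = x'" by simp
  qed
qed
lemma dw_facts:
  assumes dw: "double_ward Q f e"
  shows "f e e = e" "\<And>z. z \<in> Q \<Longrightarrow> f (f e z) z = e"
    "\<And>w. w \<in> Q \<Longrightarrow> f (f e w) e = w"
    "\<And>z. z \<in> Q \<Longrightarrow> f e (f e z) = z"
    "\<And>z. z \<in> Q \<Longrightarrow> f z e = f e z"
proof -
  have qg: "quasigroup_on Q f" and eQ: "e \<in> Q"
    and W: "\<And>x y z. x \<in> Q \<Longrightarrow> y \<in> Q \<Longrightarrow> z \<in> Q \<Longrightarrow> f (f (f e e) (f x z)) (f (f e y) z) = f x y"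
    using dw unfolding double_ward_def by blast+
  note cl = qg_facts(1)[OF qg] and ls = qg_facts(2)[OF qg] and rs = qg_facts(3)[OF qg]
    and lc = qg_facts(4)[OF qg] and rc = qg_facts(5)[OF qg]
  define u where "u = f e e"
  have uQ: "u \<in> Q" unfolding u_def by (rule cl[OF eQ eQ])
  have s1: "f (f u w) (f (f e z) z) = w" if hw: "w \<in> Q" and hz: "z \<in> Q" for w z
  proof -
    obtain x where x: "x \<in> Q" "f x z = w" using rs[OF hz hw] by blast
    have "f (f u (f x z)) (f (f e z) z) = f x z" unfolding u_def by (rule W[OF x(1) hz hz])
    then show ?thesis using x(2) by simp
  qed
  define c where "c = f u e"
  have cQ: "c \<in> Q" unfolding c_def by (rule cl[OF uQ eQ])
  have cz: "f (f e z) z = c" if hz: "z \<in> Q" for z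
  proof -
    have "f (f u e) (f (f e z) z) = f (f u e) (f (f e e) e)" using s1[OF eQ hz] s1[OF eQ eQ] by simp
    then have "f (f e z) z = f (f e e) e" by (rule lc[OF cl[OF uQ eQ] cl[OF cl[OF eQ hz] hz] cl[OF cl[OF eQ eQ] eQ]])
    then show ?thesis unfolding c_def u_def .
  qed
  have s1': "f (f u w) c = w" if hw: "w \<in> Q" for w using s1[OF hw eQ] cz[OF eQ] by simp
  have s3: "f u (f w c) = w" if hw: "w \<in> Q" for w
  proof -
    obtain q where q: "q \<in> Q" "f u q = w" using ls[OF uQ hw] by blast
    have "f (f u q) c = q" by (rule s1'[OF q(1)])
    then have "f w c = q" using q(2) by simp
    then show ?thesis using q(2) by simp
  qed
  have s4: "f (f e y) c = y" if hy: "y \<in> Q" for y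
  proof -
    have "f (f u (f e c)) (f (f e y) c) = f e y" unfolding u_def by (rule W[OF eQ hy cQ])
    then have "f e (f (f e y) c) = f e y" using s3[OF eQ] by simp
    then show ?thesis by (rule lc[OF eQ cl[OF cl[OF eQ hy] cQ] hy])
  qed
  have ue: "u = e"
  proof -
    have "f (f e e) c = f (f u e) c" using s4[OF eQ] s1'[OF eQ] by simp
    then have "f e e = f u e" by (rule rc[OF cQ cl[OF eQ eQ] cl[OF uQ eQ]])
    then show ?thesis by (rule rc[OF eQ eQ uQ, symmetric])
  qed
  show ee: "f e e = e" using ue unfolding u_def .
  have ce: "c = e" unfolding c_def ue ee ..
  show s6: "\<And>z. z \<in> Q \<Longrightarrow> f (f e z) z = e" using cz ce by simp
  show s6b: "\<And>w. w \<in> Q \<Longrightarrow> f (f e w) e = w" using s1' ue ce by simp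
  show s7: "\<And>z. z \<in> Q \<Longrightarrow> f e (f e z) = z"
  proof -
    fix z assume z: "z \<in> Q"
    have ez: "f e z \<in> Q" by (rule cl[OF eQ z])
    have "f (f (f e e) (f (f e z) z)) (f (f e e) z) = f (f e z) e" by (rule W[OF ez eQ z])
    then have "f (f e e) (f e z) = f (f e z) e" unfolding s6[OF z] ee .
    then show "f e (f e z) = z" unfolding ee s6b[OF z] .
  qed
  show "\<And>z. z \<in> Q \<Longrightarrow> f z e = f e z"
  proof -
    fix z assume z: "z \<in> Q"
    have "f (f e (f e z)) e = f e z" by (rule s6b[OF cl[OF eQ z]])
    then show "f z e = f e z" unfolding s7[OF z] .
  qed
qed

lemma dw_group:
  assumes dw: "double_ward Q f e"
  shows "group (diamond_group Q f e)"
proof -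
  have qg: "quasigroup_on Q f" and eQ: "e \<in> Q"
    and W: "\<And>x y z. x \<in> Q \<Longrightarrow> y \<in> Q \<Longrightarrow> z \<in> Q \<Longrightarrow> f (f (f e e) (f x z)) (f (f e y) z) = f x y"
    using dw unfolding double_ward_def by blast+
  note cl = qg_facts(1)[OF qg] and rs = qg_facts(3)[OF qg]
  note F = dw_facts[OF dw]
  have W': "\<And>x y z. x \<in> Q \<Longrightarrow> y \<in> Q \<Longrightarrow> z \<in> Q \<Longrightarrow> f (f e (f x z)) (f (f e y) z) = f x y"
    using W F(1) by simp
  show ?thesis
  proof (rule groupI)
    fix x y assume "x \<in> carrier (diamond_group Q f e)" "y \<in> carrier (diamond_group Q f e)"
    then show "x \<otimes>\<^bsub>diamond_group Q f e\<^esub> y \<in> carrier (diamond_group Q f e)"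
      by (simp add: diamond_group_def cl eQ)
  next
    show "\<one>\<^bsub>diamond_group Q f e\<^esub> \<in> carrier (diamond_group Q f e)" by (simp add: diamond_group_def eQ)
  next
    fix x assume "x \<in> carrier (diamond_group Q f e)"
    then show "\<one>\<^bsub>diamond_group Q f e\<^esub> \<otimes>\<^bsub>diamond_group Q f e\<^esub> x = x"
      by (simp add: diamond_group_def F(1) F(4))
  next
    fix x assume x: "x \<in> carrier (diamond_group Q f e)"
    then have xQ: "x \<in> Q" by (simp add: diamond_group_def)
    have "f (f e (f e x)) (f e x) = e" using F(2)[of "f e x"] cl eQ xQ by simp
    then show "\<exists>y\<in>carrier (diamond_group Q f e). y \<otimes>\<^bsub>diamond_group Q f e\<^esub> x = \<one>\<^bsub>diamond_group Q f e\<^esub>"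
      using cl eQ xQ by (auto simp add: diamond_group_def)
  next
    fix a b c assume "a \<in> carrier (diamond_group Q f e)" "b \<in> carrier (diamond_group Q f e)" "c \<in> carrier (diamond_group Q f e)"
    then have a: "a \<in> Q" and b: "b \<in> Q" and c: "c \<in> Q" by (simp_all add: diamond_group_def)
    obtain t where t: "t \<in> Q" "f t (f e b) = f e c" using rs[of "f e b" "f e c"] cl eQ b c by blast
    define y where "y = f e t"
    have yQ: "y \<in> Q" using y_def cl eQ t by simp
    have ey: "f e y = t" using y_def F(4) t by simp
    have i: "f (f e (f (f e a) (f e b))) (f e c) = f (f e a) y"
      using W'[of "f e a" y "f e b"] cl eQ a b yQ ey t by simp
    have ii: "f (f e b) (f e c) = f e y"
    proof -
      have "f (f e (f e (f e b))) (f (f e y) (f e b)) = f e y" using W'[of e y "f e b"] cl eQ b yQ by simp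
      then show ?thesis using F(4)[of "f e b"] cl eQ b ey t by simp
    qed
    have "f (f e a) (f e (f (f e b) (f e c))) = f (f e a) y" using ii F(4) yQ by simp
    then show "a \<otimes>\<^bsub>diamond_group Q f e\<^esub> b \<otimes>\<^bsub>diamond_group Q f e\<^esub> c =
           a \<otimes>\<^bsub>diamond_group Q f e\<^esub> (b \<otimes>\<^bsub>diamond_group Q f e\<^esub> c)"
      using i by (simp add: diamond_group_def)
  qed
qed

lemma modn_mod: "0 < n \<Longrightarrow> modn n x mod n = x mod n"
  by (simp add: modn_def)

lemma modn_range: "0 < n \<Longrightarrow> modn n x \<in> {1..n}"
  by (auto simp add: modn_def)

lemma modn_id: "x \<in> {1..n} \<Longrightarrow> modn n x = x"
  by (cases "x = n") (auto simp add: modn_def)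

lemma modn_eq: "0 < n \<Longrightarrow> modn n a = modn n b \<longleftrightarrow> a mod n = b mod n"
  by (metis modn_mod modn_def)

lemma modn_add: "0 < n \<Longrightarrow> modn n (modn n a + b) = modn n (a + b)"
  unfolding modn_eq by (metis mod_add_left_eq modn_mod)

theorem theorem4p14:
  fixes n k e :: nat and f :: "nat \<Rightarrow> nat \<Rightarrow> nat"
  assumes "double_ward {1..n} f e"
    and "1 \<le> k" and "k < n"
    and "translatable n f k"
  shows "k = n - 1 \<and> group (diamond_group {1..n} f e) \<and> cyclic_group (diamond_group {1..n} f e)"
proof -
  define Q where "Q = {1..n}"
  have dw: "double_ward Q f e" using assms(1) Q_def by simp
  have n0: "0 < n" using assms(3) by simp
  have qg: "quasigroup_on Q f" and eQ: "e \<in> Q" using dw unfolding double_ward_def by blast+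
  note cl = qg_facts(1)[OF qg] and lc = qg_facts(4)[OF qg]
  note F = dw_facts[OF dw]
  have tr: "\<And>i j. i \<in> Q \<Longrightarrow> j \<in> Q \<Longrightarrow> f i j = f (modn n (i + 1)) (modn n (j + k))"
    using assms(4) Q_def unfolding translatable_def by blast
  have mQ: "\<And>x. modn n x \<in> Q" using modn_range[OF n0] Q_def by blast
  have mid: "\<And>x. x \<in> Q \<Longrightarrow> modn n x = x" using modn_id Q_def by blast
  define g where "g = modn n (e + 1)"
  have gQ: "g \<in> Q" using g_def mQ by simp
  have kk: "k = n - 1"
  proof -
    define y where "y = modn n (e + (n - k))"
    have yQ: "y \<in> Q" using y_def mQ by simp
    have "modn n (y + k) = modn n (e + n)" unfolding y_def modn_add[OF n0]
      using assms(3) by (simp add: algebra_simps)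
    also have "\<dots> = e" using modn_eq[OF n0, of "e + n" e] mid[OF eQ] by simp
    finally have "f e y = f g e" using tr[OF eQ yQ] g_def by simp
    also have "\<dots> = f e g" using F(5)[OF gQ] .
    finally have "y = g" by (rule lc[OF eQ yQ gQ])
    then have "(e + (n - k)) mod n = (e + 1) mod n" unfolding y_def g_def modn_eq[OF n0] .
    then have "(n - k) mod n = 1 mod n" using cong_add_lcancel_nat unfolding cong_def by blast
    then show ?thesis using assms(2,3) by simp
  qed
  define G where "G = diamond_group Q f e"
  have grp: "group G" unfolding G_def by (rule dw_group[OF dw])
  interpret G: group G by (rule grp)
  have carr: "carrier G = Q" and one: "\<one>\<^bsub>G\<^esub> = e"
    and mult: "\<And>x y. x \<otimes>\<^bsub>G\<^esub> y = f (f e x) (f e y)" by (simp_all add: G_def diamond_group_def)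
  have invG: "inv\<^bsub>G\<^esub> p = f e p" if p: "p \<in> Q" for p
  proof (rule G.inv_equality)
    show "f e p \<otimes>\<^bsub>G\<^esub> p = \<one>\<^bsub>G\<^esub>" unfolding mult one by (rule F(2)[OF cl[OF eQ p]])
  qed (use p cl[OF eQ p] carr in auto)
  have iota: "f e (f a b) = f (f e b) (f e a)" if a: "a \<in> Q" and b: "b \<in> Q" for a b
  proof -
    have ea: "f e a \<in> Q" and eb: "f e b \<in> Q" using cl eQ a b by auto
    have "f a b = f e a \<otimes>\<^bsub>G\<^esub> f e b" unfolding mult F(4)[OF a] F(4)[OF b] ..
    then have "f e (f a b) = inv\<^bsub>G\<^esub> (f e a \<otimes>\<^bsub>G\<^esub> f e b)" using invG[OF cl[OF a b]] by simp
    also have "\<dots> = inv\<^bsub>G\<^esub> (f e b) \<otimes>\<^bsub>G\<^esub> inv\<^bsub>G\<^esub> (f e a)"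
      using G.inv_mult_group ea eb carr by simp
    also have "\<dots> = b \<otimes>\<^bsub>G\<^esub> a" using invG[OF ea] invG[OF eb] F(4)[OF a] F(4)[OF b] by simp
    finally show ?thesis unfolding mult .
  qed
  have A: "f g x = f e (modn n (x + 1))" if x: "x \<in> Q" for x
  proof -
    have "modn n (modn n (x + 1) + k) = modn n (x + n)" unfolding modn_add[OF n0]
      using kk n0 by (simp add: algebra_simps)
    also have "\<dots> = x" using modn_eq[OF n0, of "x + n" x] mid[OF x] by simp
    finally show ?thesis using tr[OF eQ mQ[of "x + 1"]] g_def by simp
  qed
  have B: "x \<otimes>\<^bsub>G\<^esub> g = modn n (x + 1)" if x: "x \<in> Q" for x
  proof -
    have "x \<otimes>\<^bsub>G\<^esub> g = f e (f g x)" unfolding mult using iota[OF gQ x] by simp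
    also have "\<dots> = modn n (x + 1)" using A[OF x] F(4)[OF mQ] by simp
    finally show ?thesis .
  qed
  have C: "g [^]\<^bsub>G\<^esub> m = modn n (e + m)" for m :: nat
  proof (induction m)
    case 0
    then show ?case using mid[OF eQ] one by simp
  next
    case (Suc m)
    have "g [^]\<^bsub>G\<^esub> Suc m = modn n (e + m) \<otimes>\<^bsub>G\<^esub> g" using Suc by simp
    also have "\<dots> = modn n (modn n (e + m) + 1)" using B[OF mQ] .
    also have "\<dots> = modn n (e + Suc m)" using modn_add[OF n0, of "e + m" 1] by simp
    finally show ?case .
  qed
  have "carrier G = range (\<lambda>m::int. g [^]\<^bsub>G\<^esub> m)"
  proof
    show "carrier G \<subseteq> range (\<lambda>m::int. g [^]\<^bsub>G\<^esub> m)"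
    proof
      fix x assume "x \<in> carrier G"
      then have x: "x \<in> Q" using carr by simp
      have "e \<le> n" using eQ Q_def by simp
      then have "g [^]\<^bsub>G\<^esub> (int (x + n - e)) = modn n (e + (x + n - e))" using C int_pow_int by metis
      also have "\<dots> = modn n (x + n)" using \<open>e \<le> n\<close> by simp
      also have "\<dots> = x" using modn_eq[OF n0, of "x + n" x] mid[OF x] by simp
      finally show "x \<in> range (\<lambda>m::int. g [^]\<^bsub>G\<^esub> m)" by (metis rangeI)
    qed
  next
    show "range (\<lambda>m::int. g [^]\<^bsub>G\<^esub> m) \<subseteq> carrier G" using gQ carr by auto
  qed
  then have "cyclic_group G" using G.cyclic_group gQ carr by blast
  then show ?thesis using kk grp G_def Q_def by simp
qed

end
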